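(* Let $k,r,p>0$ be integers and let $F:\mathbb{N}^k\to\mathbb{N}^r$ satisfy $|F(x)|\le \min(x)$ for all $x\in\mathbb{N}^k$. Then there exists a set $E\subseteq\mathbb{N}$ with $|E|=p$ such that $|F[E^k]|\le k^k\,p$, where $F[E^k]=\{F(x):x\in E^k\}$.
   Context: $\mathbb{N}=\{0,1,2,\dots\}$. For $x=(x_1,\dots,x_k)\in\mathbb{N}^k$, $\min(x)$ is the minimum coordinate of $x$ and $|x|$ is the maximum coordinate of $x$ (sup norm). For a finite set $S$, $|S|$ denotes its cardinality. *)

theory Defs
  imports Main
begin

text \<open>Vectors in N^k are represented as lists of length k.
  min(x) is the minimum coordinate, |y| the maximum coordinate (sup norm).\<close>

definition cube :: "nat set \<Rightarrow> nat \<Rightarrow> nat list set" where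
  "cube E k = {x. length x = k \<and> set x \<subseteq> E}"

definition supnorm :: "nat list \<Rightarrow> nat" where
  "supnorm y = Max (set y)"

definition minc :: "nat list \<Rightarrow> nat" where
  "minc x = Min (set x)"

end

theory Submission imports Defs "HOL-Library.Ramsey" "HOL-Library.Countable" begin

lemma sorted_union_app:
  fixes A B :: "nat set"
  assumes "finite A" "finite B" "\<forall>u\<in>A. \<forall>v\<in>B. u < v"
  shows "sorted_list_of_set (A \<union> B) = sorted_list_of_set A @ sorted_list_of_set B"
proof -
  have "sorted_wrt (<) (sorted_list_of_set A @ sorted_list_of_set B)"
    using assms by (simp add: sorted_wrt_append strict_sorted_list_of_set)
  moreover have "sorted_wrt (<) (sorted_list_of_set (A \<union> B))"
    by (simp add: strict_sorted_list_of_set)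
  moreover have "set (sorted_list_of_set (A \<union> B)) = set (sorted_list_of_set A @ sorted_list_of_set B)"
    using assms by simp
  ultimately show ?thesis using strict_sorted_equal by blast
qed

definition pos :: "nat list \<Rightarrow> nat \<Rightarrow> nat" where
  "pos L v = (LEAST i. i < length L \<and> L ! i = v)"

lemma pos_prop: assumes "v \<in> set L" shows "pos L v < length L \<and> L ! pos L v = v"
proof -
  obtain i where "i < length L" "L ! i = v" using assms by (metis in_set_conv_nth)
  then show ?thesis unfolding pos_def by (metis (mono_tags, lifting) LeastI)
qed

definition pat :: "nat list \<Rightarrow> nat list" where
  "pat x = map (pos (sorted_list_of_set (set x))) x"

lemma pat_in: assumes "length x = k" shows "set (pat x) \<subseteq> {..<k} \<and> length (pat x) = k"
proof -
  have "\<forall>v\<in>set x. pos (sorted_list_of_set (set x)) v < card (set x)"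
    using pos_prop by (metis length_sorted_list_of_set finite_set set_sorted_list_of_set)
  moreover have "card (set x) \<le> k" using assms card_length by blast
  ultimately show ?thesis using assms unfolding pat_def by fastforce
qed

lemma step:
  fixes k r :: nat and F :: "nat list \<Rightarrow> nat list" and a :: nat and S :: "nat set"
  assumes "k > 0" and "r > 0"
    and len: "\<And>x. length x = k \<Longrightarrow> length (F x) = r"
    and bnd: "\<And>x. length x = k \<Longrightarrow> supnorm (F x) \<le> minc x"
    and infS: "infinite S" and gtS: "\<forall>s\<in>S. a < s"
  shows "\<exists>S' c. S' \<subseteq> S \<and> infinite S' \<and>
     (\<forall>x. length x = k \<longrightarrow> set x \<subseteq> insert a S' \<longrightarrow> a \<in> set x \<longrightarrow> F x = c (pat x))"
proof -
  define sig where "sig = List.n_lists k [0..<k]"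
  define col where "col T \<sigma> = (let y = map (\<lambda>j. sorted_list_of_set (insert a T) ! j) \<sigma> in
      if a \<in> set y then F y else [])" for T \<sigma>
  define G where "G T = map (col T) sig" for T
  define D where "D = {l. set l \<subseteq> {..a} \<and> length l = r} \<union> {[]}"
  define C where "C = {ls. set ls \<subseteq> D \<and> length ls = length sig}"
  have finD: "finite D" unfolding D_def using finite_lists_length_eq[of "{..a}" r] by simp
  have finC: "finite C" unfolding C_def using finite_lists_length_eq[OF finD] by simp
  have GC: "G X \<in> C" if X: "X \<subseteq> S" "finite X" "card X = k - 1" for X
  proof -
    have aX: "a \<notin> X" using X gtS by auto
    have cardL: "length (sorted_list_of_set (insert a X)) = k"
      using X aX \<open>k > 0\<close> by simp
    have "col X \<sigma> \<in> D" if "\<sigma> \<in> set sig" for \<sigma>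
    proof -
      have s: "length \<sigma> = k" "set \<sigma> \<subseteq> {..<k}" using that unfolding sig_def set_n_lists by auto
      define y where "y = map (\<lambda>j. sorted_list_of_set (insert a X) ! j) \<sigma>"
      have ly: "length y = k" using s y_def by simp
      have sy: "set y \<subseteq> insert a X"
      proof
        fix v assume "v \<in> set y"
        then obtain j where "j \<in> set \<sigma>" "v = sorted_list_of_set (insert a X) ! j" unfolding y_def by auto
        then have "v \<in> set (sorted_list_of_set (insert a X))" using s cardL by auto
        then show "v \<in> insert a X" using X(2) set_sorted_list_of_set[of "insert a X"] by (simp del: sorted_list_of_set_insert_remove set_sorted_list_of_set)
      qed
      show ?thesis
      proof (cases "a \<in> set y")
        case True
        have "minc y = a" unfolding minc_def
          proof (rule Min_eqI)
          fix v assume "v \<in> set y"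
          then have "v = a \<or> v \<in> S" using sy X(1) by auto
          then show "a \<le> v" using gtS by force
        qed (use True in auto)
        then have sup: "supnorm (F y) \<le> a" using bnd ly by metis
        have "set (F y) \<subseteq> {..a}"
        proof
          fix v assume "v \<in> set (F y)"
          then have "v \<le> supnorm (F y)" unfolding supnorm_def by simp
          then show "v \<in> {..a}" using sup by simp
        qed
        then have "F y \<in> D" unfolding D_def using len ly by auto
        then show ?thesis unfolding col_def y_def[symmetric] using True by simp
      next
        case False
        then show ?thesis unfolding col_def y_def[symmetric] D_def by simp
      qed
    qed
    then show ?thesis unfolding C_def G_def by auto
  qed
  define s where "s = Suc (Max (to_nat ` C))"
  have fs: "\<forall>X. X \<subseteq> S \<and> finite X \<and> card X = k - 1 \<longrightarrow> to_nat (G X) < s"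
  proof (intro allI impI)
    fix X assume "X \<subseteq> S \<and> finite X \<and> card X = k - 1"
    then have "G X \<in> C" using GC by blast
    then have "to_nat (G X) \<le> Max (to_nat ` C)" using finC by simp
    then show "to_nat (G X) < s" unfolding s_def by simp
  qed
  obtain Y t where Y: "Y \<subseteq> S" "infinite Y" "t < s"
    and Yc: "\<forall>X. X \<subseteq> Y \<and> finite X \<and> card X = k - 1 \<longrightarrow> to_nat (G X) = t"
    using Ramsey[OF infS fs] by blast
  obtain T0 where T0: "T0 \<subseteq> Y" "finite T0" "card T0 = k - 1"
    using infinite_arbitrarily_large[OF Y(2)] by blast
  define c where "c = col T0"
  have same: "col T \<sigma> = c \<sigma>" if "T \<subseteq> Y" "finite T" "card T = k - 1" "\<sigma> \<in> set sig" for T \<sigma>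
  proof -
    have "to_nat (G T) = to_nat (G T0)" using Yc that T0 by metis
    then have "G T = G T0" by simp
    then show ?thesis unfolding G_def c_def map_eq_conv using that(4) by blast
  qed
  have main: "F x = c (pat x)" if x: "length x = k" "set x \<subseteq> insert a Y" "a \<in> set x" for x
  proof -
    define V where "V = set x"
    have cV: "card V \<le> k" "card V \<ge> 1" using x card_length V_def
      by (auto simp: Suc_le_eq card_gt_0_iff)
    have "infinite (Y - {..Max V})" using Y(2) by (simp add: Diff_infinite_finite)
    then obtain W where W: "W \<subseteq> Y - {..Max V}" "finite W" "card W = k - card V"
      using infinite_arbitrarily_large by blast
    define T where "T = (V - {a}) \<union> W"
    have WV: "\<forall>u\<in>V. \<forall>w\<in>W. u < w"
    proof (intro ballI)
      fix u w assume "u \<in> V" "w \<in> W"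
      then have "u \<le> Max V" "Max V < w" using W V_def by auto
      then show "u < w" by simp
    qed
    have TY: "T \<subseteq> Y" using W x V_def T_def by auto
    have fT: "finite T" using W V_def T_def by simp
    have "card T = card (V - {a}) + card W" unfolding T_def
      using WV W V_def by (intro card_Un_disjoint) auto
    then have cT: "card T = k - 1" using cV W x V_def by simp
    have iT: "insert a T = V \<union> W" using T_def x V_def by auto
    define Lx where "Lx = sorted_list_of_set V"
    have L: "sorted_list_of_set (insert a T) = Lx @ sorted_list_of_set W"
      unfolding iT Lx_def using sorted_union_app[OF _ W(2) WV] V_def by simp
    have ps: "pat x \<in> set sig" unfolding sig_def set_n_lists using pat_in[OF x(1)] by auto
    have "map (\<lambda>j. sorted_list_of_set (insert a T) ! j) (pat x) = x"
      unfolding L pat_def Lx_def[symmetric] V_def[symmetric]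
    proof -
      have "(Lx @ sorted_list_of_set W) ! pos Lx v = v" if "v \<in> set x" for v
      proof -
        have "v \<in> set Lx" using that unfolding Lx_def V_def by simp
        then show ?thesis using pos_prop[of v Lx] by (simp add: nth_append)
      qed
      then show "map (\<lambda>j. (Lx @ sorted_list_of_set W) ! j) (map (pos Lx) x) = x"
        by (simp add: map_idI)
    qed
    then have "col T (pat x) = F x" unfolding col_def using x(3) by simp
    then show ?thesis using same[OF TY fT cT ps] by simp
  qed
  show ?thesis using Y main by blast
qed

lemma finite_cube: "finite E \<Longrightarrow> finite (cube E k)"
  unfolding cube_def using finite_lists_length_eq[of E k] by (simp add: conj_commute)

lemma mainlem:
  fixes k r :: nat and F :: "nat list \<Rightarrow> nat list"
  assumes kp: "k > 0" and rp: "r > 0"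
    and len: "\<And>x. length x = k \<Longrightarrow> length (F x) = r"
    and bnd: "\<And>x. length x = k \<Longrightarrow> supnorm (F x) \<le> minc x"
  shows "infinite S \<Longrightarrow> \<exists>E. finite E \<and> card E = p \<and> E \<subseteq> S \<and> card (F ` cube E k) \<le> k ^ k * p"
proof (induction p arbitrary: S)
  case 0
  have "cube {} k = {}" unfolding cube_def using kp by auto
  then show ?case by (intro exI[of _ "{}"]) simp
next
  case (Suc p)
  obtain a where a: "a \<in> S" using Suc.prems by (metis finite.emptyI ex_in_conv)
  define S0 where "S0 = S - {..a}"
  have infS0: "infinite S0" using Suc.prems unfolding S0_def by (simp add: Diff_infinite_finite)
  have gt: "\<forall>s\<in>S0. a < s" unfolding S0_def by auto
  obtain S' c where S': "S' \<subseteq> S0" "infinite S'"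
    and Sc: "\<forall>x. length x = k \<longrightarrow> set x \<subseteq> insert a S' \<longrightarrow> a \<in> set x \<longrightarrow> F x = c (pat x)"
    using step[OF kp rp len bnd infS0 gt] by blast
  obtain E' where E': "finite E'" "card E' = p" "E' \<subseteq> S'" "card (F ` cube E' k) \<le> k ^ k * p"
    using Suc.IH[OF S'(2)] by blast
  define P where "P = {\<sigma>. set \<sigma> \<subseteq> {..<k} \<and> length \<sigma> = k}"
  have cP: "card P = k ^ k" "finite P" unfolding P_def
    using card_lists_length_eq[of "{..<k}" k] finite_lists_length_eq[of "{..<k}" k] by auto
  have aE': "a \<notin> E'" using E'(3) S'(1) gt by auto
  have sub: "F ` cube (insert a E') k \<subseteq> F ` cube E' k \<union> c ` P"
  proof
    fix z assume "z \<in> F ` cube (insert a E') k"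
    then obtain x where x: "length x = k" "set x \<subseteq> insert a E'" "z = F x" unfolding cube_def by auto
    show "z \<in> F ` cube E' k \<union> c ` P"
    proof (cases "a \<in> set x")
      case True
      have "set x \<subseteq> insert a S'" using x E'(3) by auto
      then have "z = c (pat x)" using Sc x True by simp
      moreover have "pat x \<in> P" unfolding P_def using pat_in[OF x(1)] by auto
      ultimately show ?thesis by blast
    next
      case False
      then have "x \<in> cube E' k" unfolding cube_def using x by auto
      then show ?thesis using x by blast
    qed
  qed
  have "card (F ` cube (insert a E') k) \<le> card (F ` cube E' k \<union> c ` P)"
    by (rule card_mono[OF _ sub]) (use E'(1) cP finite_cube in auto)
  also have "\<dots> \<le> card (F ` cube E' k) + card (c ` P)" by (rule card_Un_le)
  also have "\<dots> \<le> k ^ k * p + k ^ k" using E'(4) card_image_le[OF cP(2), of c] cP(1) by linarith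
  finally have "card (F ` cube (insert a E') k) \<le> k ^ k * Suc p" by simp
  moreover have "insert a E' \<subseteq> S" using a E'(3) S'(1) S0_def by auto
  ultimately show ?case using E' aE' by (intro exI[of _ "insert a E'"]) simp
qed

theorem theorem0p1:
  fixes k r p :: nat and F :: "nat list \<Rightarrow> nat list"
  assumes "k > 0" and "r > 0" and "p > 0"
    and "\<And>x. length x = k \<Longrightarrow> length (F x) = r"
    and "\<And>x. length x = k \<Longrightarrow> supnorm (F x) \<le> minc x"
  shows "\<exists>E :: nat set. finite E \<and> card E = p \<and> card (F ` cube E k) \<le> k ^ k * p"
  using mainlem[OF assms(1,2,4,5), of UNIV p] by blast

end
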